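(* Consider the following two-period model. States $\omega_1,\omega_2\in\{0,1\}$ satisfy $\Pr[\omega_1=1]=\mu_0\in(0,1)$ and $\Pr[\omega_2=\omega\mid\omega_1=\omega]=\rho$ with $\rho\in(1/2,1)$. In each period $t$ a test may be taken at cost $k>0$ to the principal; a test reveals $\omega_t$, and if no test is taken $\omega_t$ is nevertheless revealed (for free) with probability $\pi\in(0,1)$; unrevealed states are recorded as the report $r_t=\varnothing$, and revealed states are recorded truthfully, $r_t=\omega_t$. A (baseline) mechanism consists of $\sigma_1\in\{0,1\}$ (whether to test in period 1), $\sigma_2:\{\varnothing,0,1\}\to\{0,1\}$ (whether to test in period 2 as a function of $r_1$) and $\hat x:\{\varnothing,0,1\}^2\to\{0,1\}$; testing occurs exactly when recommended. The principal solves $$\max_{(\sigma,\hat x)}\ \Pr_\sigma[\hat x(r_1,r_2)=\omega_2]-k\big(\sigma_1+\mathbb{E}_{\sigma_1}[\sigma_2(r_1)]\big),$$ where $\mathbb{E}_{\sigma_1}[\sigma_2(r_1)]=[\sigma_1+(1-\sigma_1)\pi][\mu_0\sigma_2(1)+(1-\mu_0)\sigma_2(0)]+(1-\sigma_1)(1-\pi)\sigma_2(\varnothing)$. Let $\kappa=k/(1-\pi)$ and $\mu_2(\varnothing)=\rho\mu_0+(1-\rho)(1-\mu_0)$. Then an optimal solution pairs the efficient assignment policy $\hat x^*(h_2)=\mathbb{1}[\mu_2(h_2)\ge 1/2]$ (where $\mu_2(h_2)$ is the posterior probability that $\omega_2=1$ given the reports $h_2=(r_1,r_2)$, required on all histories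 occurring with positive probability) with the testing policy $\sigma_1^*=0$ and: (i) if $\kappa\in(0,1-\rho]$: $\sigma_2^*(r_1)=1$ for all $r_1$; (ii) if $\kappa\in(1-\rho,\min\{\mu_2(\varnothing),1-\mu_2(\varnothing)\}]$: $\sigma_2^*(r_1)=\mathbb{1}[r_1=\varnothing]$; (iii) if $\kappa>\min\{\mu_2(\varnothing),1-\mu_2(\varnothing)\}$: $\sigma_2^*(r_1)=0$ for all $r_1$. Moreover, if $\kappa=0$, then always testing is optimal.
   Context: This is the "baseline" problem in which the principal directly controls testing and observes all revealed test results (the agent's incentives are ignored). $\mathbb{1}[\cdot]$ is the indicator function. *)

theory Defs
  imports Complex_Main
begin

text \<open>States are bool (True = 1). Reports are bool option: None = no revelation,
  Some w = revealed state w. Testing decisions are bool (True = test).\<close>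

definition prior :: "real \<Rightarrow> bool \<Rightarrow> real" where
  "prior \<mu>0 w = (if w then \<mu>0 else 1 - \<mu>0)"

definition trans_pr :: "real \<Rightarrow> bool \<Rightarrow> bool \<Rightarrow> real" where
  "trans_pr \<rho> w1 w2 = (if w2 = w1 then \<rho> else 1 - \<rho>)"

definition rep_pr :: "real \<Rightarrow> bool \<Rightarrow> bool \<Rightarrow> bool option \<Rightarrow> real" where
  "rep_pr \<pi> s w r =
     (if s then (if r = Some w then 1 else 0)
      else if r = Some w then \<pi> else if r = None then 1 - \<pi> else 0)"

definition joint :: "real \<Rightarrow> real \<Rightarrow> real \<Rightarrow> bool \<Rightarrow> (bool option \<Rightarrow> bool)
    \<Rightarrow> bool \<Rightarrow> bool \<Rightarrow> bool option \<Rightarrow> bool option \<Rightarrow> real" where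
  "joint \<mu>0 \<rho> \<pi> s1 s2 w1 w2 r1 r2 =
     prior \<mu>0 w1 * trans_pr \<rho> w1 w2 * rep_pr \<pi> s1 w1 r1 * rep_pr \<pi> (s2 r1) w2 r2"

definition prob_correct :: "real \<Rightarrow> real \<Rightarrow> real \<Rightarrow> bool \<Rightarrow> (bool option \<Rightarrow> bool)
    \<Rightarrow> (bool option \<Rightarrow> bool option \<Rightarrow> bool) \<Rightarrow> real" where
  "prob_correct \<mu>0 \<rho> \<pi> s1 s2 x =
     (\<Sum>w1\<in>UNIV. \<Sum>w2\<in>UNIV. \<Sum>r1\<in>UNIV. \<Sum>r2\<in>UNIV.
        joint \<mu>0 \<rho> \<pi> s1 s2 w1 w2 r1 r2 * of_bool (x r1 r2 = w2))"

definition exp_test2 :: "real \<Rightarrow> real \<Rightarrow> bool \<Rightarrow> (bool option \<Rightarrow> bool) \<Rightarrow> real" where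
  "exp_test2 \<mu>0 \<pi> s1 s2 =
     (of_bool s1 + (1 - of_bool s1) * \<pi>) *
       (\<mu>0 * of_bool (s2 (Some True)) + (1 - \<mu>0) * of_bool (s2 (Some False)))
     + (1 - of_bool s1) * (1 - \<pi>) * of_bool (s2 None)"

definition objective :: "real \<Rightarrow> real \<Rightarrow> real \<Rightarrow> real \<Rightarrow> bool \<Rightarrow> (bool option \<Rightarrow> bool)
    \<Rightarrow> (bool option \<Rightarrow> bool option \<Rightarrow> bool) \<Rightarrow> real" where
  "objective \<mu>0 \<rho> \<pi> k s1 s2 x =
     prob_correct \<mu>0 \<rho> \<pi> s1 s2 x - k * (of_bool s1 + exp_test2 \<mu>0 \<pi> s1 s2)"

definition hist_prob :: "real \<Rightarrow> real \<Rightarrow> real \<Rightarrow> bool \<Rightarrow> (bool option \<Rightarrow> bool)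
    \<Rightarrow> bool option \<Rightarrow> bool option \<Rightarrow> real" where
  "hist_prob \<mu>0 \<rho> \<pi> s1 s2 r1 r2 =
     (\<Sum>w1\<in>UNIV. \<Sum>w2\<in>UNIV. joint \<mu>0 \<rho> \<pi> s1 s2 w1 w2 r1 r2)"

definition post2 :: "real \<Rightarrow> real \<Rightarrow> real \<Rightarrow> bool \<Rightarrow> (bool option \<Rightarrow> bool)
    \<Rightarrow> bool option \<Rightarrow> bool option \<Rightarrow> real" where
  "post2 \<mu>0 \<rho> \<pi> s1 s2 r1 r2 =
     (\<Sum>w1\<in>UNIV. joint \<mu>0 \<rho> \<pi> s1 s2 w1 True r1 r2) / hist_prob \<mu>0 \<rho> \<pi> s1 s2 r1 r2"

definition efficient_assign :: "real \<Rightarrow> real \<Rightarrow> real \<Rightarrow> bool \<Rightarrow> (bool option \<Rightarrow> bool)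
    \<Rightarrow> (bool option \<Rightarrow> bool option \<Rightarrow> bool) \<Rightarrow> bool" where
  "efficient_assign \<mu>0 \<rho> \<pi> s1 s2 x =
     (\<forall>r1 r2. hist_prob \<mu>0 \<rho> \<pi> s1 s2 r1 r2 > 0 \<longrightarrow>
        x r1 r2 = (post2 \<mu>0 \<rho> \<pi> s1 s2 r1 r2 \<ge> 1/2))"

definition optimal_mech :: "real \<Rightarrow> real \<Rightarrow> real \<Rightarrow> real \<Rightarrow> bool \<Rightarrow> (bool option \<Rightarrow> bool)
    \<Rightarrow> (bool option \<Rightarrow> bool option \<Rightarrow> bool) \<Rightarrow> bool" where
  "optimal_mech \<mu>0 \<rho> \<pi> k s1 s2 x =
     (\<forall>s1' s2' x'. objective \<mu>0 \<rho> \<pi> k s1' s2' x' \<le> objective \<mu>0 \<rho> \<pi> k s1 s2 x)"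

end

theory Submission
  imports Defs
begin

lemma sum_bool: "(\<Sum>w\<in>(UNIV::bool set). f w) = f True + f False"
  by (simp add: UNIV_bool add_ac)

lemma UNIV_opt: "(UNIV :: bool option set) = {None, Some True, Some False}"
  using UNIV_option_conv[where 'a=bool] by (auto simp: UNIV_bool)

lemma sum_opt: "(\<Sum>r\<in>(UNIV::bool option set). f r) = f None + f (Some True) + f (Some False)"
  by (simp add: UNIV_opt add_ac)

definition A where
  "A \<mu>0 \<rho> \<pi> s1 s2 r1 r2 w2 = (\<Sum>w1\<in>UNIV. joint \<mu>0 \<rho> \<pi> s1 s2 w1 w2 r1 r2)"

definition best where
  "best \<mu>0 \<rho> \<pi> s1 s2 = (\<Sum>r1\<in>UNIV. \<Sum>r2\<in>UNIV. max (A \<mu>0 \<rho> \<pi> s1 s2 r1 r2 True) (A \<mu>0 \<rho> \<pi> s1 s2 r1 r2 False))"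

lemma pc_swap: "prob_correct \<mu>0 \<rho> \<pi> s1 s2 x =
  (\<Sum>r1\<in>UNIV. \<Sum>r2\<in>UNIV. \<Sum>w2\<in>UNIV. A \<mu>0 \<rho> \<pi> s1 s2 r1 r2 w2 * of_bool (x r1 r2 = w2))"
  unfolding prob_correct_def A_def sum_distrib_right sum_bool sum_opt by (simp add: algebra_simps)


definition G where "G \<pi> q s = (if s then 1 else \<pi> + (1-\<pi>)*q)"

lemma cellSome:
  assumes "0 < \<mu>0" "\<mu>0 < 1" "1/2 < \<rho>" "\<rho> < 1" "0 < \<pi>" "\<pi> < 1"
  shows "(\<Sum>r2\<in>UNIV. max (A \<mu>0 \<rho> \<pi> s1 s2 (Some w) r2 True) (A \<mu>0 \<rho> \<pi> s1 s2 (Some w) r2 False))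
     = (if s1 then 1 else \<pi>) * prior \<mu>0 w * G \<pi> \<rho> (s2 (Some w))"
  using assms
  apply (cases w; cases s1; cases "s2 (Some w)")
  apply (simp_all add: A_def sum_bool sum_opt joint_def prior_def trans_pr_def rep_pr_def G_def)
  apply (simp_all add: algebra_simps)
  done

lemma cellNoneFF:
  assumes "0 < \<mu>0" "\<mu>0 < 1" "1/2 < \<rho>" "\<rho> < 1" "0 < \<pi>" "\<pi> < 1" "\<not> s2 None"
  shows "(\<Sum>r2\<in>UNIV. max (A \<mu>0 \<rho> \<pi> False s2 None r2 True) (A \<mu>0 \<rho> \<pi> False s2 None r2 False))
     = (1-\<pi>) * G \<pi> (max (\<rho> * \<mu>0 + (1 - \<rho>) * (1 - \<mu>0)) (1 - (\<rho> * \<mu>0 + (1 - \<rho>) * (1 - \<mu>0)))) (s2 None)"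
proof -
  define m where "m = \<rho> * \<mu>0 + (1 - \<rho>) * (1 - \<mu>0)"
  have a1: "A \<mu>0 \<rho> \<pi> False s2 None None True = ((1-\<pi>)*(1-\<pi>)) * m"
    using assms by (simp add: A_def sum_bool joint_def prior_def trans_pr_def rep_pr_def m_def algebra_simps)
  have a2: "A \<mu>0 \<rho> \<pi> False s2 None None False = ((1-\<pi>)*(1-\<pi>)) * (1-m)"
    using assms by (simp add: A_def sum_bool joint_def prior_def trans_pr_def rep_pr_def m_def algebra_simps)
  have a3: "A \<mu>0 \<rho> \<pi> False s2 None (Some True) True = (1-\<pi>)*\<pi>*m"
    using assms by (simp add: A_def sum_bool joint_def prior_def trans_pr_def rep_pr_def m_def algebra_simps)
  have a4: "A \<mu>0 \<rho> \<pi> False s2 None (Some True) False = 0"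
    using assms by (simp add: A_def sum_bool joint_def prior_def trans_pr_def rep_pr_def m_def algebra_simps)
  have a5: "A \<mu>0 \<rho> \<pi> False s2 None (Some False) False = (1-\<pi>)*\<pi>*(1-m)"
    using assms by (simp add: A_def sum_bool joint_def prior_def trans_pr_def rep_pr_def m_def algebra_simps)
  have a6: "A \<mu>0 \<rho> \<pi> False s2 None (Some False) True = 0"
    using assms by (simp add: A_def sum_bool joint_def prior_def trans_pr_def rep_pr_def m_def algebra_simps)
  have m0: "0 \<le> m" "m \<le> 1"
  proof -
    have "0 \<le> \<rho> * \<mu>0" "0 \<le> (1 - \<rho>) * (1 - \<mu>0)" "0 \<le> \<rho> * (1-\<mu>0)" "0 \<le> (1 - \<rho>) * \<mu>0"
      using assms by simp_all
    moreover have "1 - m = \<rho> * (1-\<mu>0) + (1 - \<rho>) * \<mu>0" unfolding m_def by (simp add: algebra_simps)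
    ultimately show "0 \<le> m" "m \<le> 1" unfolding m_def by linarith+
  qed
  have mx: "max (((1-\<pi>)*(1-\<pi>)) * m) (((1-\<pi>)*(1-\<pi>)) * (1-m)) = ((1-\<pi>)*(1-\<pi>)) * max m (1-m)"
    using assms by (simp add: max_mult_distrib_left)
  show ?thesis
  proof -
    have "(1 - \<pi>) * (1 - \<pi>) * max m (1 - m) + (1 - \<pi>) * \<pi> * m + (1 - \<pi>) * \<pi> * (1 - m)
      = (1-\<pi>) * (\<pi> + (1-\<pi>) * max m (1-m))" by (simp add: algebra_simps)
    moreover have "0 \<le> (1 - \<pi>) * \<pi> * m" "0 \<le> (1 - \<pi>) * \<pi> * (1-m)" using assms m0 by simp_all
    ultimately show ?thesis unfolding sum_opt a1 a2 a3 a4 a5 a6 mx m_def[symmetric] using assms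
      by (simp add: G_def max_absorb1 max_absorb2)
  qed
qed

lemma cellNone:
  assumes "0 < \<mu>0" "\<mu>0 < 1" "1/2 < \<rho>" "\<rho> < 1" "0 < \<pi>" "\<pi> < 1"
  shows "(\<Sum>r2\<in>UNIV. max (A \<mu>0 \<rho> \<pi> s1 s2 None r2 True) (A \<mu>0 \<rho> \<pi> s1 s2 None r2 False))
     = (if s1 then 0 else (1-\<pi>) * G \<pi> (max (\<rho> * \<mu>0 + (1 - \<rho>) * (1 - \<mu>0)) (1 - (\<rho> * \<mu>0 + (1 - \<rho>) * (1 - \<mu>0)))) (s2 None))"
  using assms
  apply (cases s1; cases "s2 None")
  apply (simp_all add: cellNoneFF)
  apply (simp_all add: A_def sum_bool sum_opt joint_def prior_def trans_pr_def rep_pr_def G_def)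
  apply (simp_all add: algebra_simps)
  done

lemma cell_le:
  fixes f :: "bool \<Rightarrow> real"
  assumes "0 \<le> f True" "0 \<le> f False"
  shows "(\<Sum>w2\<in>UNIV. f w2 * of_bool (xv = w2)) \<le> max (f True) (f False)"
  using assms by (cases xv) (simp_all add: sum_bool)

lemma cell_eq:
  fixes f :: "bool \<Rightarrow> real"
  assumes "0 \<le> f True" "0 \<le> f False"
    and "f True + f False > 0 \<longrightarrow> xv = (f True / (f True + f False) \<ge> 1/2)"
  shows "(\<Sum>w2\<in>UNIV. f w2 * of_bool (xv = w2)) = max (f True) (f False)"
proof (cases "f True + f False > 0")
  case True
  then have "xv = (f True / (f True + f False) \<ge> 1/2)" using assms by simp
  moreover have "(f True / (f True + f False) \<ge> 1/2) = (f True \<ge> f False)"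
    using True by (simp add: field_simps)
  ultimately show ?thesis by (cases xv) (simp_all add: sum_bool max_def)
next
  case False
  then have "f True = 0" "f False = 0" using assms by linarith+
  then show ?thesis by (simp add: sum_bool)
qed

lemma joint_nn:
  assumes "0 < \<mu>0" "\<mu>0 < 1" "1/2 < \<rho>" "\<rho> < 1" "0 < \<pi>" "\<pi> < 1"
  shows "0 \<le> joint \<mu>0 \<rho> \<pi> s1 s2 w1 w2 r1 r2"
proof -
  have "0 \<le> prior \<mu>0 w1" "0 \<le> trans_pr \<rho> w1 w2" "0 \<le> rep_pr \<pi> s1 w1 r1" "0 \<le> rep_pr \<pi> (s2 r1) w2 r2"
    using assms by (auto simp: prior_def trans_pr_def rep_pr_def)
  then show ?thesis unfolding joint_def by simp
qed

lemma A_nn: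
  assumes "0 < \<mu>0" "\<mu>0 < 1" "1/2 < \<rho>" "\<rho> < 1" "0 < \<pi>" "\<pi> < 1"
  shows "0 \<le> A \<mu>0 \<rho> \<pi> s1 s2 r1 r2 w2"
  unfolding A_def by (rule sum_nonneg) (use joint_nn[OF assms] in auto)

lemma pc_le:
  assumes "0 < \<mu>0" "\<mu>0 < 1" "1/2 < \<rho>" "\<rho> < 1" "0 < \<pi>" "\<pi> < 1"
  shows "prob_correct \<mu>0 \<rho> \<pi> s1 s2 x \<le> best \<mu>0 \<rho> \<pi> s1 s2"
  unfolding pc_swap best_def
  by (intro sum_mono cell_le A_nn[OF assms])

lemma pc_eq:
  assumes "0 < \<mu>0" "\<mu>0 < 1" "1/2 < \<rho>" "\<rho> < 1" "0 < \<pi>" "\<pi> < 1"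
    and "efficient_assign \<mu>0 \<rho> \<pi> s1 s2 x"
  shows "prob_correct \<mu>0 \<rho> \<pi> s1 s2 x = best \<mu>0 \<rho> \<pi> s1 s2"
  unfolding pc_swap best_def
proof (intro sum.cong refl cell_eq A_nn[OF assms(1-6)])
  fix r1 r2
  have h: "hist_prob \<mu>0 \<rho> \<pi> s1 s2 r1 r2 = A \<mu>0 \<rho> \<pi> s1 s2 r1 r2 True + A \<mu>0 \<rho> \<pi> s1 s2 r1 r2 False"
    unfolding hist_prob_def A_def by (simp add: sum_bool)
  have p: "post2 \<mu>0 \<rho> \<pi> s1 s2 r1 r2 = A \<mu>0 \<rho> \<pi> s1 s2 r1 r2 True / (A \<mu>0 \<rho> \<pi> s1 s2 r1 r2 True + A \<mu>0 \<rho> \<pi> s1 s2 r1 r2 False)"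
    unfolding post2_def h by (simp add: A_def)
  have e: "0 < hist_prob \<mu>0 \<rho> \<pi> s1 s2 r1 r2 \<longrightarrow> x r1 r2 = (1/2 \<le> post2 \<mu>0 \<rho> \<pi> s1 s2 r1 r2)"
    using assms(7) unfolding efficient_assign_def by blast
  show "0 < A \<mu>0 \<rho> \<pi> s1 s2 r1 r2 True + A \<mu>0 \<rho> \<pi> s1 s2 r1 r2 False \<longrightarrow>
       x r1 r2 = (1 / 2 \<le> A \<mu>0 \<rho> \<pi> s1 s2 r1 r2 True / (A \<mu>0 \<rho> \<pi> s1 s2 r1 r2 True + A \<mu>0 \<rho> \<pi> s1 s2 r1 r2 False))"
    using e p h by simp
qed


lemma best_split: "best \<mu>0 \<rho> \<pi> s1 s2 =
   (\<Sum>r2\<in>UNIV. max (A \<mu>0 \<rho> \<pi> s1 s2 None r2 True) (A \<mu>0 \<rho> \<pi> s1 s2 None r2 False)) +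
   (\<Sum>r2\<in>UNIV. max (A \<mu>0 \<rho> \<pi> s1 s2 (Some True) r2 True) (A \<mu>0 \<rho> \<pi> s1 s2 (Some True) r2 False)) +
   (\<Sum>r2\<in>UNIV. max (A \<mu>0 \<rho> \<pi> s1 s2 (Some False) r2 True) (A \<mu>0 \<rho> \<pi> s1 s2 (Some False) r2 False))"
  unfolding best_def by (rule sum_opt)

definition H where "H \<pi> k q s = (if s then 1 - k else \<pi> + (1-\<pi>)*q)"

lemma val_F:
  assumes "0 < \<mu>0" "\<mu>0 < 1" "1/2 < \<rho>" "\<rho> < 1" "0 < \<pi>" "\<pi> < 1"
  shows "best \<mu>0 \<rho> \<pi> False s2 - k * (of_bool False + exp_test2 \<mu>0 \<pi> False s2)
    = \<pi> * \<mu>0 * H \<pi> k \<rho> (s2 (Some True)) + \<pi> * (1-\<mu>0) * H \<pi> k \<rho> (s2 (Some False))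
      + (1-\<pi>) * H \<pi> k (max (\<rho> * \<mu>0 + (1 - \<rho>) * (1 - \<mu>0)) (1 - (\<rho> * \<mu>0 + (1 - \<rho>) * (1 - \<mu>0)))) (s2 None)"
  unfolding best_split cellNone[OF assms] cellSome[OF assms] exp_test2_def
  by (cases "s2 None"; cases "s2 (Some True)"; cases "s2 (Some False)")
     (simp_all add: G_def H_def prior_def algebra_simps)

lemma val_T:
  assumes "0 < \<mu>0" "\<mu>0 < 1" "1/2 < \<rho>" "\<rho> < 1" "0 < \<pi>" "\<pi> < 1"
  shows "best \<mu>0 \<rho> \<pi> True s2 - k * (of_bool True + exp_test2 \<mu>0 \<pi> True s2)
    = - k + \<mu>0 * H \<pi> k \<rho> (s2 (Some True)) + (1-\<mu>0) * H \<pi> k \<rho> (s2 (Some False))"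
  unfolding best_split cellNone[OF assms] cellSome[OF assms] exp_test2_def
  by (cases "s2 (Some True)"; cases "s2 (Some False)")
     (simp_all add: G_def H_def prior_def algebra_simps)


lemma m_bounds:
  fixes \<mu>0 \<rho> :: real
  assumes "0 < \<mu>0" "\<mu>0 < 1" "1/2 < \<rho>" "\<rho> < 1"
  shows "1 - \<rho> < \<rho> * \<mu>0 + (1 - \<rho>) * (1 - \<mu>0)" "\<rho> * \<mu>0 + (1 - \<rho>) * (1 - \<mu>0) < \<rho>"
proof -
  have "0 < (2*\<rho> - 1) * \<mu>0" "0 < (2*\<rho> - 1) * (1-\<mu>0)" using assms by simp_all
  moreover have "\<rho> * \<mu>0 + (1 - \<rho>) * (1 - \<mu>0) - (1 - \<rho>) = (2*\<rho> - 1) * \<mu>0"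
    "\<rho> - (\<rho> * \<mu>0 + (1 - \<rho>) * (1 - \<mu>0)) = (2*\<rho> - 1) * (1-\<mu>0)" by (simp_all add: algebra_simps)
  ultimately show "1 - \<rho> < \<rho> * \<mu>0 + (1 - \<rho>) * (1 - \<mu>0)" "\<rho> * \<mu>0 + (1 - \<rho>) * (1 - \<mu>0) < \<rho>"
    by linarith+
qed

lemma sum_id1: "\<mu>0 * a + (1-\<mu>0) * (a::real) = a" by (simp add: algebra_simps)
lemma sum_id2: "\<pi> * \<mu>0 * a + \<pi> * (1-\<mu>0) * a + (1-\<pi>) * b = \<pi> * a + (1-\<pi>) * (b::real)" by (simp add: algebra_simps)

lemma obj_le:
  assumes "0 < \<mu>0" "\<mu>0 < 1" "1/2 < \<rho>" "\<rho> < 1" "0 < \<pi>" "\<pi> < 1" "0 \<le> k"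
  defines "M \<equiv> max (\<rho> * \<mu>0 + (1 - \<rho>) * (1 - \<mu>0)) (1 - (\<rho> * \<mu>0 + (1 - \<rho>) * (1 - \<mu>0)))"
  shows "objective \<mu>0 \<rho> \<pi> k s1 s2 x \<le> \<pi> * max (1-k) (\<pi> + (1-\<pi>)*\<rho>) + (1-\<pi>) * max (1-k) (\<pi> + (1-\<pi>)*M)"
proof -
  define a where "a = max (1-k) (\<pi> + (1-\<pi>)*\<rho>)"
  define b where "b = max (1-k) (\<pi> + (1-\<pi>)*M)"
  have MR: "M \<le> \<rho>" using m_bounds[OF assms(1-4)] unfolding M_def by simp
  have "(1-\<pi>)*M \<le> (1-\<pi>)*\<rho>" using MR assms by (intro mult_left_mono) auto
  then have ba: "b \<le> a" unfolding a_def b_def by simp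
  have abk: "a - b \<le> k"
  proof (cases "\<pi> + (1-\<pi>)*\<rho> \<le> 1 - k")
    case True
    then have "a = 1 - k" unfolding a_def by simp
    moreover have "1 - k \<le> b" unfolding b_def by simp
    ultimately show ?thesis using assms(7) by linarith
  next
    case False
    then have "a = \<pi> + (1-\<pi>)*\<rho>" unfolding a_def by simp
    moreover have "1 - k \<le> b" unfolding b_def by simp
    moreover have "0 \<le> (1-\<pi>)*(1-\<rho>)" using assms by simp
    moreover have "\<pi> + (1-\<pi>)*\<rho> - (1 - k) = k - (1-\<pi>)*(1-\<rho>)" by (simp add: algebra_simps)
    ultimately show ?thesis by linarith
  qed
  have "(1-\<pi>)*(a-b) \<le> 1*(a-b)" using ba assms by (intro mult_right_mono) auto
  then have "(1-\<pi>)*(a-b) \<le> a-b" by simp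
  moreover have "(1-\<pi>)*(a-b) = (a - b) - \<pi>*a + \<pi>*b" by (simp add: algebra_simps)
  moreover have "(1-\<pi>)*b = b - \<pi>*b" by (simp add: algebra_simps)
  ultimately have key: "-k + a \<le> \<pi>*a + (1-\<pi>)*b" using abk by linarith
  have Ha: "\<And>s. H \<pi> k \<rho> s \<le> a" unfolding a_def H_def by simp
  have Hb: "\<And>s. H \<pi> k M s \<le> b" unfolding b_def H_def by simp
  have ob: "objective \<mu>0 \<rho> \<pi> k s1 s2 x \<le> best \<mu>0 \<rho> \<pi> s1 s2 - k * (of_bool s1 + exp_test2 \<mu>0 \<pi> s1 s2)"
    unfolding objective_def using pc_le[OF assms(1-6)] by simp
  show ?thesis
  proof (cases s1)
    case True
    have "\<mu>0 * H \<pi> k \<rho> (s2 (Some True)) \<le> \<mu>0 * a" using Ha assms by (intro mult_left_mono) auto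
    moreover have "(1-\<mu>0) * H \<pi> k \<rho> (s2 (Some False)) \<le> (1-\<mu>0) * a" using Ha assms by (intro mult_left_mono) auto
    ultimately have "best \<mu>0 \<rho> \<pi> True s2 - k * (of_bool True + exp_test2 \<mu>0 \<pi> True s2) \<le> -k + a"
      unfolding val_T[OF assms(1-6)] using sum_id1[of \<mu>0 a] by linarith
    then show ?thesis using ob key True unfolding a_def b_def by simp
  next
    case False
    have "\<pi> * \<mu>0 * H \<pi> k \<rho> (s2 (Some True)) \<le> \<pi> * \<mu>0 * a" using Ha assms by (intro mult_left_mono) auto
    moreover have "\<pi> * (1-\<mu>0) * H \<pi> k \<rho> (s2 (Some False)) \<le> \<pi> * (1-\<mu>0) * a" using Ha assms by (intro mult_left_mono) auto
    moreover have "(1-\<pi>) * H \<pi> k M (s2 None) \<le> (1-\<pi>) * b" using Hb assms by (intro mult_left_mono) auto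
    ultimately have "best \<mu>0 \<rho> \<pi> False s2 - k * (of_bool False + exp_test2 \<mu>0 \<pi> False s2) \<le> \<pi>*a + (1-\<pi>)*b"
      unfolding val_F[OF assms(1-6)] M_def[symmetric] using sum_id2[of \<pi> \<mu>0 a b] by linarith
    then show ?thesis using ob False unfolding a_def b_def by simp
  qed
qed


lemma cand_opt:
  assumes "0 < \<mu>0" "\<mu>0 < 1" "1/2 < \<rho>" "\<rho> < 1" "0 < \<pi>" "\<pi> < 1" "0 \<le> k"
    and "efficient_assign \<mu>0 \<rho> \<pi> s1 s2 x"
    and "best \<mu>0 \<rho> \<pi> s1 s2 - k * (of_bool s1 + exp_test2 \<mu>0 \<pi> s1 s2) =
      \<pi> * max (1-k) (\<pi> + (1-\<pi>)*\<rho>) + (1-\<pi>) * max (1-k) (\<pi> + (1-\<pi>)*max (\<rho> * \<mu>0 + (1 - \<rho>) * (1 - \<mu>0)) (1 - (\<rho> * \<mu>0 + (1 - \<rho>) * (1 - \<mu>0))))"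
  shows "optimal_mech \<mu>0 \<rho> \<pi> k s1 s2 x"
  unfolding optimal_mech_def
proof (intro allI)
  fix s1' s2' x'
  have "objective \<mu>0 \<rho> \<pi> k s1 s2 x = best \<mu>0 \<rho> \<pi> s1 s2 - k * (of_bool s1 + exp_test2 \<mu>0 \<pi> s1 s2)"
    unfolding objective_def using pc_eq[OF assms(1-6,8)] by simp
  then show "objective \<mu>0 \<rho> \<pi> k s1' s2' x' \<le> objective \<mu>0 \<rho> \<pi> k s1 s2 x"
    using obj_le[OF assms(1-7), of s1' s2' x'] assms(9) by simp
qed

theorem proposition1:
  fixes \<mu>0 \<rho> \<pi> k :: real
  assumes "0 < \<mu>0" "\<mu>0 < 1" "1/2 < \<rho>" "\<rho> < 1" "0 < \<pi>" "\<pi> < 1" "0 \<le> k"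
  defines "\<kappa> \<equiv> k / (1 - \<pi>)"
      and "m \<equiv> \<rho> * \<mu>0 + (1 - \<rho>) * (1 - \<mu>0)"
  shows "(0 < \<kappa> \<and> \<kappa> \<le> 1 - \<rho> \<longrightarrow>
            (\<forall>x. efficient_assign \<mu>0 \<rho> \<pi> False (\<lambda>_. True) x \<longrightarrow>
                 optimal_mech \<mu>0 \<rho> \<pi> k False (\<lambda>_. True) x))
       \<and> (1 - \<rho> < \<kappa> \<and> \<kappa> \<le> min m (1 - m) \<longrightarrow>
            (\<forall>x. efficient_assign \<mu>0 \<rho> \<pi> False (\<lambda>r. r = None) x \<longrightarrow>
                 optimal_mech \<mu>0 \<rho> \<pi> k False (\<lambda>r. r = None) x))
       \<and> (min m (1 - m) < \<kappa> \<longrightarrow>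
            (\<forall>x. efficient_assign \<mu>0 \<rho> \<pi> False (\<lambda>_. False) x \<longrightarrow>
                 optimal_mech \<mu>0 \<rho> \<pi> k False (\<lambda>_. False) x))
       \<and> (\<kappa> = 0 \<longrightarrow>
            (\<forall>x. efficient_assign \<mu>0 \<rho> \<pi> True (\<lambda>_. True) x \<longrightarrow>
                 optimal_mech \<mu>0 \<rho> \<pi> k True (\<lambda>_. True) x))"
proof -
  define M where "M = max m (1 - m)"
  have mb: "1 - \<rho> < m" "m < \<rho>" using m_bounds[OF assms(1-4)] unfolding m_def by auto
  have MR: "M < \<rho>" "min m (1-m) = 1 - M" unfolding M_def using mb by auto
  have p1: "0 < 1 - \<pi>" using assms by simp
  have kle: "\<And>c. (\<kappa> \<le> c) = (k \<le> c * (1-\<pi>))" unfolding \<kappa>_def using p1 by (simp add: pos_divide_le_eq)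
  have klt: "\<And>c. (c < \<kappa>) = (c * (1-\<pi>) < k)" unfolding \<kappa>_def using p1 by (simp add: pos_less_divide_eq)
  have e1: "\<And>c. (1-\<pi>)*c = c - \<pi>*c" by (simp add: algebra_simps)
  have MR2: "(1-\<pi>)*M \<le> (1-\<pi>)*\<rho>" using MR p1 by simp
  have VF: "\<And>s2. best \<mu>0 \<rho> \<pi> False s2 - k * (of_bool False + exp_test2 \<mu>0 \<pi> False s2)
    = \<pi> * \<mu>0 * H \<pi> k \<rho> (s2 (Some True)) + \<pi> * (1-\<mu>0) * H \<pi> k \<rho> (s2 (Some False))
      + (1-\<pi>) * H \<pi> k M (s2 None)"
    using val_F[OF assms(1-6)] unfolding M_def m_def .
  note co = cand_opt[OF assms(1-7), unfolded m_def[symmetric], folded M_def]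
  have s1: "\<pi> * \<mu>0 * c + \<pi> * (1-\<mu>0) * c = \<pi> * c" for c :: real by (simp add: algebra_simps)
  have A1: "0 < \<kappa> \<and> \<kappa> \<le> 1 - \<rho> \<longrightarrow>
            (\<forall>x. efficient_assign \<mu>0 \<rho> \<pi> False (\<lambda>_. True) x \<longrightarrow>
                 optimal_mech \<mu>0 \<rho> \<pi> k False (\<lambda>_. True) x)"
  proof (intro impI allI)
    fix x assume h: "0 < \<kappa> \<and> \<kappa> \<le> 1 - \<rho>" and ea: "efficient_assign \<mu>0 \<rho> \<pi> False (\<lambda>_. True) x"
    have "k \<le> (1-\<rho>)*(1-\<pi>)" using h kle by simp
    then have ka: "\<pi> + (1-\<pi>)*\<rho> \<le> 1 - k" using e1[of \<rho>] by (simp add: algebra_simps)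
    then have kb: "\<pi> + (1-\<pi>)*M \<le> 1 - k" using MR2 by linarith
    show "optimal_mech \<mu>0 \<rho> \<pi> k False (\<lambda>_. True) x"
      apply (rule co[OF ea])
      unfolding VF using ka kb s1[of "1-k"] by (simp add: H_def max_absorb1 algebra_simps)
  qed
  have A2: "1 - \<rho> < \<kappa> \<and> \<kappa> \<le> min m (1 - m) \<longrightarrow>
            (\<forall>x. efficient_assign \<mu>0 \<rho> \<pi> False (\<lambda>r. r = None) x \<longrightarrow>
                 optimal_mech \<mu>0 \<rho> \<pi> k False (\<lambda>r. r = None) x)"
  proof (intro impI allI)
    fix x assume h: "1 - \<rho> < \<kappa> \<and> \<kappa> \<le> min m (1 - m)" and ea: "efficient_assign \<mu>0 \<rho> \<pi> False (\<lambda>r. r = None) x"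
    have "(1-\<rho>)*(1-\<pi>) < k" using h klt by simp
    then have ka: "1 - k < \<pi> + (1-\<pi>)*\<rho>" using e1[of \<rho>] by (simp add: algebra_simps)
    have "k \<le> (1-M)*(1-\<pi>)" using h kle MR by simp
    then have kb: "\<pi> + (1-\<pi>)*M \<le> 1 - k" using e1[of M] by (simp add: algebra_simps)
    show "optimal_mech \<mu>0 \<rho> \<pi> k False (\<lambda>r. r = None) x"
      apply (rule co[OF ea])
      unfolding VF using ka kb s1[of "\<pi> + (1-\<pi>)*\<rho>"] by (simp add: H_def max_absorb1 max_absorb2 algebra_simps)
  qed
  have A3: "min m (1 - m) < \<kappa> \<longrightarrow>
            (\<forall>x. efficient_assign \<mu>0 \<rho> \<pi> False (\<lambda>_. False) x \<longrightarrow>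
                 optimal_mech \<mu>0 \<rho> \<pi> k False (\<lambda>_. False) x)"
  proof (intro impI allI)
    fix x assume h: "min m (1 - m) < \<kappa>" and ea: "efficient_assign \<mu>0 \<rho> \<pi> False (\<lambda>_. False) x"
    have "(1-M)*(1-\<pi>) < k" using h klt MR by simp
    then have kb: "1 - k < \<pi> + (1-\<pi>)*M" using e1[of M] by (simp add: algebra_simps)
    then have ka: "1 - k < \<pi> + (1-\<pi>)*\<rho>" using MR2 by linarith
    show "optimal_mech \<mu>0 \<rho> \<pi> k False (\<lambda>_. False) x"
      apply (rule co[OF ea])
      unfolding VF using ka kb s1[of "\<pi> + (1-\<pi>)*\<rho>"] by (simp add: H_def max_absorb1 max_absorb2 algebra_simps)
  qed
  have A4: "\<kappa> = 0 \<longrightarrow>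
            (\<forall>x. efficient_assign \<mu>0 \<rho> \<pi> True (\<lambda>_. True) x \<longrightarrow>
                 optimal_mech \<mu>0 \<rho> \<pi> k True (\<lambda>_. True) x)"
  proof (intro impI allI)
    fix x assume h: "\<kappa> = 0" and ea: "efficient_assign \<mu>0 \<rho> \<pi> True (\<lambda>_. True) x"
    have k0: "k = 0" using h p1 unfolding \<kappa>_def by simp
    have "(1-\<pi>)*\<rho> \<le> (1-\<pi>)*1" using assms p1 by (intro mult_left_mono) auto
    then have ka: "\<pi> + (1-\<pi>)*\<rho> \<le> 1" by simp
    then have kb: "\<pi> + (1-\<pi>)*M \<le> 1" using MR2 by linarith
    show "optimal_mech \<mu>0 \<rho> \<pi> k True (\<lambda>_. True) x"
      apply (rule co[OF ea])
      unfolding val_T[OF assms(1-6)] using ka kb k0 by (simp add: H_def max_absorb1 algebra_simps)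
  qed
  show ?thesis using A1 A2 A3 A4 by blast
qed

end
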